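(* Consider on $\mathcal D=[0,+\infty)^3$ the system $$\dot E=\beta_E F\Big(1-\frac{E}{K}\Big)-(\nu_E+\delta_E)E,\qquad \dot M=(1-\nu)\nu_E E-\delta_M M,\qquad \dot F=\nu\nu_E E-\delta_F F .$$ If $\mathcal R_0\le 1$, then the equilibrium $\mathbf 0=(0,0,0)^T$ is globally asymptotically stable in $\mathcal D$ for this system.
   Context: Parameters: $\beta_E,\nu_E,\delta_E,\delta_M,\delta_F,K>0$ and $\nu\in(0,1)$. The basic offspring number is $\mathcal R_0:=\dfrac{\beta_E\nu\nu_E}{\delta_F(\nu_E+\delta_E)}$. The set $\mathcal D$ is positively invariant and solutions starting in $\mathcal D$ are defined for all $t\ge0$. An equilibrium $x_e\in\mathcal D$ is stable in $\mathcal D$ if for every $\varepsilon>0$ there is $\delta>0$ such that every solution with $x(0)\in\mathcal D$, $\|x(0)-x_e\|<\delta$ satisfies $\|x(t)-x_e\|<\varepsilon$ for all $t>0$; it is a global attractor in $\mathcal D$ if every solution with $x(0)\in\mathcal D$ satisfies $x(t)\to x_e$ as $t\to\infty$; it is globally asymptotically stable in $\mathcal D$ if it is both stable and a global attractor in $\mathcal D$. *)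

theory Defs
  imports "HOL-Analysis.Analysis"
begin

definition mosq_field ::
  "real \<Rightarrow> real \<Rightarrow> real \<Rightarrow> real \<Rightarrow> real \<Rightarrow> real \<Rightarrow> real
   \<Rightarrow> real \<times> real \<times> real \<Rightarrow> real \<times> real \<times> real" where
  "mosq_field \<beta>E \<nu>E \<delta>E \<delta>M \<delta>F K \<nu> s =
     (case s of (E, M, F) \<Rightarrow>
       (\<beta>E * F * (1 - E / K) - (\<nu>E + \<delta>E) * E,
        (1 - \<nu>) * \<nu>E * E - \<delta>M * M,
        \<nu> * \<nu>E * E - \<delta>F * F))"

definition R0 :: "real \<Rightarrow> real \<Rightarrow> real \<Rightarrow> real \<Rightarrow> real \<Rightarrow> real" where
  "R0 \<beta>E \<nu>E \<delta>E \<delta>F \<nu> = (\<beta>E * \<nu> * \<nu>E) / (\<delta>F * (\<nu>E + \<delta>E))"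

definition nonneg_orthant :: "(real \<times> real \<times> real) set" where
  "nonneg_orthant = {(E, M, F). E \<ge> 0 \<and> M \<ge> 0 \<and> F \<ge> 0}"

definition is_solution ::
  "(real \<times> real \<times> real \<Rightarrow> real \<times> real \<times> real) \<Rightarrow> (real \<Rightarrow> real \<times> real \<times> real) \<Rightarrow> bool" where
  "is_solution f x \<longleftrightarrow> (\<forall>t\<ge>0. (x has_vector_derivative f (x t)) (at t within {0..}))"

definition stable_in ::
  "(real \<times> real \<times> real \<Rightarrow> real \<times> real \<times> real) \<Rightarrow> (real \<times> real \<times> real) set
   \<Rightarrow> real \<times> real \<times> real \<Rightarrow> bool" where
  "stable_in f D xe \<longleftrightarrow>
     (\<forall>\<epsilon>>0. \<exists>\<delta>>0. \<forall>x. is_solution f x \<and> x 0 \<in> D \<and> norm (x 0 - xe) < \<delta>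
        \<longrightarrow> (\<forall>t>0. norm (x t - xe) < \<epsilon>))"

definition global_attractor_in ::
  "(real \<times> real \<times> real \<Rightarrow> real \<times> real \<times> real) \<Rightarrow> (real \<times> real \<times> real) set
   \<Rightarrow> real \<times> real \<times> real \<Rightarrow> bool" where
  "global_attractor_in f D xe \<longleftrightarrow>
     (\<forall>x. is_solution f x \<and> x 0 \<in> D \<longrightarrow> (x \<longlongrightarrow> xe) at_top)"

definition GAS_in ::
  "(real \<times> real \<times> real \<Rightarrow> real \<times> real \<times> real) \<Rightarrow> (real \<times> real \<times> real) set
   \<Rightarrow> real \<times> real \<times> real \<Rightarrow> bool" where
  "GAS_in f D xe \<longleftrightarrow> stable_in f D xe \<and> global_attractor_in f D xe"

end

theory Submission
  imports Defs
begin


lemma vd_fst: "(x has_vector_derivative v) F \<Longrightarrow> ((\<lambda>t. fst (x t)) has_vector_derivative fst v) F"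
  unfolding has_vector_derivative_def by (drule has_derivative_fst) simp
lemma vd_snd: "(x has_vector_derivative v) F \<Longrightarrow> ((\<lambda>t. snd (x t)) has_vector_derivative snd v) F"
  unfolding has_vector_derivative_def by (drule has_derivative_snd) simp

definition Dv :: "(real\<Rightarrow>real) \<Rightarrow> (real\<Rightarrow>real) \<Rightarrow> bool" where
  "Dv f f' \<longleftrightarrow> (\<forall>t\<ge>0. (f has_real_derivative f' t) (at t within {0..}))"

lemma Dv_cont: "Dv f f' \<Longrightarrow> continuous_on {0..} f"
  unfolding Dv_def continuous_on_eq_continuous_within
  by (metis DERIV_continuous atLeast_iff)

lemma Dv_at: "Dv f f' \<Longrightarrow> 0 < t \<Longrightarrow> (f has_real_derivative f' t) (at t)"
  unfolding Dv_def using at_within_interior[of t "{0::real..}"] by (metis interior_real_atLeast greaterThan_iff less_imp_le)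

lemma Dv_antimono:
  assumes "Dv f f'" "0 \<le> s" "\<And>t. t \<ge> s \<Longrightarrow> f' t \<le> 0" "s \<le> t"
  shows "f t \<le> f s"
proof (rule DERIV_nonpos_imp_decreasing_open[OF assms(4)])
  show "continuous_on {s..t} f" using Dv_cont[OF assms(1)] by (rule continuous_on_subset) (use assms in auto)
  fix y assume "s < y" "y < t"
  then show "\<exists>z. (f has_real_derivative z) (at y) \<and> z \<le> 0"
    using Dv_at[OF assms(1), of y] assms(2,3) by force
qed

lemma Dv_mult_exp:
  assumes "Dv f f'"
  shows "Dv (\<lambda>t. f t * exp (k*t)) (\<lambda>t. (f' t + k * f t) * exp (k*t))"
  using assms unfolding Dv_def
  by (auto intro!: derivative_eq_intros simp: algebra_simps)




locale mosq =
  fixes bE nE dE dM dF K nu :: real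
  assumes pos: "bE>0" "nE>0" "dE>0" "dM>0" "dF>0" "K>0" "0<nu" "nu<1"
    and R: "R0 bE nE dE dF nu \<le> 1"
begin
definition "a = nE + dE"
definition "c = nu * nE"
definition "e = (1 - nu) * nE"
definition "lam = bE + c + bE / K + 1"
lemma a_pos: "a > 0" using pos by (simp add: a_def)
lemma c_pos: "c > 0" using pos by (simp add: c_def)
lemma e_pos: "e > 0" using pos by (simp add: e_def)
lemma lam_pos: "lam > 0" using pos c_pos unfolding lam_def by (simp add: add_pos_pos)
lemma bc_le: "bE * c \<le> dF * a"
proof -
  have "dF * (nE + dE) > 0" using pos by simp
  then have "bE * nu * nE \<le> dF * (nE + dE)" using R by (simp add: R0_def pos_divide_le_eq)
  then show ?thesis by (simp add: a_def c_def mult.assoc)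
qed
end

locale msol = mosq +
  fixes x :: "real \<Rightarrow> real \<times> real \<times> real"
  assumes sol: "is_solution (mosq_field bE nE dE dM dF K nu) x"
    and init: "x 0 \<in> nonneg_orthant"
begin
definition "E t = fst (x t)"
definition "M t = fst (snd (x t))"
definition "F t = snd (snd (x t))"
definition "E' t = bE * F t * (1 - E t / K) - a * E t"
definition "M' t = e * E t - dM * M t"
definition "F' t = c * E t - dF * F t"

lemma init': "E 0 \<ge> 0" "M 0 \<ge> 0" "F 0 \<ge> 0"
  using init by (auto simp: nonneg_orthant_def E_def M_def F_def split: prod.splits)

lemma field_eq: "mosq_field bE nE dE dM dF K nu (x t) = (E' t, M' t, F' t)"
  by (simp add: mosq_field_def E'_def M'_def F'_def E_def M_def F_def a_def c_def e_def split_beta)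

lemma hv: "t \<ge> 0 \<Longrightarrow> (x has_vector_derivative (E' t, M' t, F' t)) (at t within {0..})"
  using sol field_eq unfolding is_solution_def by metis

lemma dEv: "Dv E E'"
  unfolding Dv_def has_real_derivative_iff_has_vector_derivative
  using vd_fst[OF hv] by (simp add: E_def[abs_def])
lemma dMv: "Dv M M'"
  unfolding Dv_def has_real_derivative_iff_has_vector_derivative
  using vd_fst[OF vd_snd[OF hv]] by (simp add: M_def[abs_def])
lemma dFv: "Dv F F'"
  unfolding Dv_def has_real_derivative_iff_has_vector_derivative
  using vd_snd[OF vd_snd[OF hv]] by (simp add: F_def[abs_def])

lemma x_eq: "x t = (E t, M t, F t)"
  by (simp add: E_def M_def F_def)

end


context msol begin

lemma barrier:
  assumes T: "T \<ge> 0" and ep: "0 < \<epsilon>" "\<epsilon> \<le> 1"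
  shows "\<forall>t\<in>{0..T}. E t + \<epsilon>*exp(lam*(t-T)) > 0 \<and> F t + \<epsilon>*exp(lam*(t-T)) > 0"
proof (rule ccontr)
  assume neg: "\<not> ?thesis"
  define w where "w t = \<epsilon>*exp(lam*(t-T))" for t
  define g1 where "g1 t = E t + w t" for t
  define g2 where "g2 t = F t + w t" for t
  have wpos: "w t > 0" for t using ep by (simp add: w_def)
  have wle: "w t \<le> 1" if "t \<le> T" for t
  proof -
    have "exp(lam*(t-T)) \<le> 1" using lam_pos that by (simp add: mult_nonneg_nonpos)
    then show ?thesis using ep unfolding w_def by (metis mult_le_one exp_ge_zero less_imp_le)
  qed
  have dg1: "Dv g1 (\<lambda>t. E' t + lam * w t)"
    using dEv unfolding Dv_def g1_def w_def by (auto intro!: derivative_eq_intros)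
  have dg2: "Dv g2 (\<lambda>t. F' t + lam * w t)"
    using dFv unfolding Dv_def g2_def w_def by (auto intro!: derivative_eq_intros)
  define S where "S = ({0..T} \<inter> g1 -` {..0}) \<union> ({0..T} \<inter> g2 -` {..0})"
  have Seq: "S = {t\<in>{0..T}. g1 t \<le> 0 \<or> g2 t \<le> 0}" unfolding S_def by auto
  have "S \<noteq> {}" using neg unfolding Seq g1_def g2_def w_def by force
  have "closed S" unfolding S_def
    by (intro closed_Un continuous_closed_preimage continuous_on_subset[OF Dv_cont[OF dg1]]
        continuous_on_subset[OF Dv_cont[OF dg2]]) auto
  have bdd: "bdd_below S" unfolding Seq by (auto intro: bdd_belowI[where m=0])
  define t1 where "t1 = Inf S"
  have t1S: "t1 \<in> S" using closed_contains_Inf[OF \<open>S \<noteq> {}\<close> bdd \<open>closed S\<close>] t1_def by simp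
  have t1le: "t1 \<le> t" if "t \<in> S" for t using cInf_lower[OF that bdd] t1_def by simp
  have t1T: "0 \<le> t1" "t1 \<le> T" using t1S Seq by auto
  have "t1 \<noteq> 0"
  proof
    assume "t1 = 0"
    then have "g1 0 \<le> 0 \<or> g2 0 \<le> 0" using t1S Seq by auto
    moreover have "g1 0 > 0" "g2 0 > 0" using init' wpos[of 0] by (auto simp: g1_def g2_def)
    ultimately show False by auto
  qed
  then have t1p: "t1 > 0" using t1T by simp
  have before: "g1 t > 0 \<and> g2 t > 0" if "0 \<le> t" "t < t1" for t
  proof (rule ccontr)
    assume "\<not> ?thesis"
    then have "t \<in> S" using that t1T unfolding Seq by auto
    then show False using t1le that by force
  qed
  have lim_ge: "g t1 \<ge> 0" if dg: "Dv g g'" and bf: "\<And>t. 0 \<le> t \<Longrightarrow> t < t1 \<Longrightarrow> g t > 0" for g g'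
  proof -
    have "isCont g t1" using DERIV_isCont[OF Dv_at[OF dg t1p]] .
    then have "(g \<longlongrightarrow> g t1) (at_left t1)"
      unfolding isCont_def by (rule tendsto_mono[rotated]) (simp add: at_le)
    moreover have "eventually (\<lambda>t. 0 \<le> g t) (at_left t1)"
      using eventually_at_left_real[OF t1p] proof eventually_elim
        case (elim t) then show ?case using bf[of t] by simp
      qed
    ultimately show ?thesis by (rule tendsto_lowerbound) simp
  qed
  have g1t: "g1 t1 \<ge> 0" by (rule lim_ge[OF dg1]) (use before in auto)
  have g2t: "g2 t1 \<ge> 0" by (rule lim_ge[OF dg2]) (use before in auto)
  have contra: False if dg: "Dv g g'" and z: "g t1 = 0" and gp: "g' t1 > 0"
     and bf: "\<And>t. 0 \<le> t \<Longrightarrow> t < t1 \<Longrightarrow> g t > 0" for g g'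
  proof -
    obtain d where d: "d > 0" "\<And>h. h > 0 \<Longrightarrow> h < d \<Longrightarrow> g (t1 - h) < g t1"
      using DERIV_pos_inc_left[OF Dv_at[OF dg t1p] gp] by blast
    define h where "h = min d t1 / 2"
    have "h > 0" "h < d" "h < t1" using d t1p by (auto simp: h_def)
    then have "g (t1 - h) < 0" using d z by auto
    moreover have "g (t1 - h) > 0" using bf \<open>h > 0\<close> \<open>h < t1\<close> by auto
    ultimately show False by simp
  qed
  define W where "W = w t1"
  have W: "0 < W" "W \<le> 1" using wpos wle t1T by (auto simp: W_def)
  have "g1 t1 = 0 \<or> g2 t1 = 0" using t1S Seq g1t g2t by auto
  then show False
  proof
    assume z: "g1 t1 = 0"
    have Eq: "E t1 = - W" using z by (simp add: g1_def W_def)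
    have Fge: "F t1 \<ge> - W" using g2t by (simp add: g2_def W_def)
    have k: "1 + W / K > 0" using W pos by (simp add: add_pos_nonneg)
    have "bE * F t1 * (1 + W / K) \<ge> bE * (- W) * (1 + W / K)"
      using Fge k pos by (intro mult_right_mono mult_left_mono) auto
    moreover have "W * W \<le> W" using W by (simp add: mult_le_one)
    then have "bE * W * W / K \<le> bE * W / K" using pos by (simp add: divide_right_mono mult.assoc)
    ultimately have i1: "E' t1 + lam * w t1 \<ge> - bE * W - bE * W / K + a * W + lam * W"
      unfolding E'_def Eq W_def[symmetric] by (simp add: algebra_simps)
    have i2: "- bE * W - bE * W / K + a * W + lam * W = (c + 1 + a) * W"
      by (simp add: lam_def algebra_simps)
    have i3: "(c + 1 + a) * W > 0" using W a_pos c_pos by simp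
    have "E' t1 + lam * w t1 > 0" using i1 i2 i3 by linarith
    then show False using contra[OF dg1 z] before by auto
  next
    assume z: "g2 t1 = 0"
    have Fq: "F t1 = - W" using z by (simp add: g2_def W_def)
    have Ege: "E t1 \<ge> - W" using g1t by (simp add: g1_def W_def)
    have "c * E t1 \<ge> c * (-W)" using Ege c_pos by (intro mult_left_mono) auto
    then have i1: "F' t1 + lam * w t1 \<ge> - c * W + dF * W + lam * W"
      unfolding F'_def Fq W_def[symmetric] by simp
    have i2: "- c * W + dF * W + lam * W = (bE + bE / K + 1 + dF) * W"
      by (simp add: lam_def algebra_simps)
    have i3: "(bE + bE / K + 1 + dF) * W > 0" using W pos by (simp add: add_pos_pos)
    have "F' t1 + lam * w t1 > 0" using i1 i2 i3 by linarith
    then show False using contra[OF dg2 z] before by auto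
  qed
qed

lemma EF_nonneg: assumes "t \<ge> 0" shows "E t \<ge> 0" "F t \<ge> 0"
proof -
  have key: "E t > - \<epsilon> \<and> F t > - \<epsilon>" if "0 < \<epsilon>" "\<epsilon> \<le> 1" for \<epsilon>
  proof -
    have "0 < E t + \<epsilon> \<and> 0 < F t + \<epsilon>"
      using bspec[OF barrier[OF assms that], of t] assms by simp
    then show ?thesis by linarith
  qed
  show "E t \<ge> 0"
  proof (rule ccontr)
    assume "\<not> ?thesis"
    then have n: "E t < 0" by simp
    define \<epsilon> where "\<epsilon> = min 1 (- E t / 2)"
    have "0 < \<epsilon>" "\<epsilon> \<le> 1" "\<epsilon> \<le> - E t / 2" using n by (auto simp: \<epsilon>_def)
    then have "- \<epsilon> < E t" using key by blast
    then show False using \<open>\<epsilon> \<le> - E t / 2\<close> n by linarith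
  qed
  show "F t \<ge> 0"
  proof (rule ccontr)
    assume "\<not> ?thesis"
    then have n: "F t < 0" by simp
    define \<epsilon> where "\<epsilon> = min 1 (- F t / 2)"
    have "0 < \<epsilon>" "\<epsilon> \<le> 1" "\<epsilon> \<le> - F t / 2" using n by (auto simp: \<epsilon>_def)
    then have "- \<epsilon> < F t" using key by blast
    then show False using \<open>\<epsilon> \<le> - F t / 2\<close> n by linarith
  qed
qed

end



lemma Dv_mono:
  assumes "Dv f f'" "0 \<le> s" "\<And>t. t \<ge> s \<Longrightarrow> f' t \<ge> 0" "s \<le> t"
  shows "f s \<le> f t"
proof (rule DERIV_nonneg_imp_increasing_open[OF assms(4)])
  show "continuous_on {s..t} f" using Dv_cont[OF assms(1)] by (rule continuous_on_subset) (use assms in auto)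
  fix y assume "s < y" "y < t"
  then show "\<exists>z. (f has_real_derivative z) (at y) \<and> 0 \<le> z"
    using Dv_at[OF assms(1), of y] assms(2,3) by force
qed

context msol begin

definition "V t = c * E t + a * F t"

lemma V_der: "Dv V (\<lambda>t. c * E' t + a * F' t)"
  using dEv dFv unfolding Dv_def V_def[abs_def] by (auto intro!: derivative_eq_intros)

lemma V'_nonpos: assumes "t \<ge> 0" shows "c * E' t + a * F' t \<le> 0"
proof -
  have eq: "c * E' t + a * F' t = F t * (c * bE - a * dF) - (c * bE / K) * (F t * E t)"
    unfolding E'_def F'_def using pos by (simp add: field_simps)
  have "F t * (c * bE - a * dF) \<le> 0" using EF_nonneg[OF assms] bc_le
    by (intro mult_nonneg_nonpos) (auto simp: mult.commute)
  moreover have "(c * bE / K) * (F t * E t) \<ge> 0" using EF_nonneg[OF assms] c_pos pos by simp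
  ultimately show ?thesis unfolding eq by linarith
qed

lemma V_mono: "0 \<le> s \<Longrightarrow> s \<le> t \<Longrightarrow> V t \<le> V s"
  by (rule Dv_antimono[OF V_der]) (auto intro: V'_nonpos)

lemma V_nonneg: "t \<ge> 0 \<Longrightarrow> V t \<ge> 0"
  using EF_nonneg[of t] a_pos c_pos by (simp add: V_def)

lemma E_le: assumes "t \<ge> 0" shows "E t \<le> V t / c"
proof -
  have "c * E t \<le> V t" using EF_nonneg[OF assms] a_pos by (simp add: V_def)
  then show ?thesis using c_pos by (simp add: pos_le_divide_eq mult.commute)
qed

lemma F_le: assumes "t \<ge> 0" shows "F t \<le> V t / a"
proof -
  have "a * F t \<le> V t" using EF_nonneg[OF assms] c_pos by (simp add: V_def)
  then show ?thesis using a_pos by (simp add: pos_le_divide_eq mult.commute)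
qed

lemma M_cmp:
  assumes "0 \<le> s" "\<And>t. t \<ge> s \<Longrightarrow> e * E t \<le> dM * \<beta>" "s \<le> t"
  shows "(M t - \<beta>) * exp (dM * t) \<le> (M s - \<beta>) * exp (dM * s)"
proof (rule Dv_antimono[OF _ assms(1) _ assms(3)])
  show "Dv (\<lambda>t. (M t - \<beta>) * exp (dM * t)) (\<lambda>t. (M' t + dM * (M t - \<beta>)) * exp (dM * t))"
    using dMv unfolding Dv_def by (auto intro!: derivative_eq_intros simp: algebra_simps)
  fix t assume "s \<le> t"
  then have "M' t + dM * (M t - \<beta>) \<le> 0" using assms(2)[of t] by (simp add: M'_def algebra_simps)
  then show "(M' t + dM * (M t - \<beta>)) * exp (dM * t) \<le> 0" by (simp add: mult_nonpos_nonneg)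
qed

lemma M_nonneg: assumes "t \<ge> 0" shows "M t \<ge> 0"
proof -
  have "M 0 * exp (dM * 0) \<le> M t * exp (dM * t)"
  proof (rule Dv_mono[OF _ order_refl _ assms])
    show "Dv (\<lambda>t. M t * exp (dM * t)) (\<lambda>t. (M' t + dM * M t) * exp (dM * t))"
      using Dv_mult_exp[OF dMv] .
    fix t :: real assume "t \<ge> 0"
    then show "(M' t + dM * M t) * exp (dM * t) \<ge> 0"
      using EF_nonneg(1)[of t] e_pos by (simp add: M'_def)
  qed
  then have "0 \<le> M t * exp (dM * t)" using init' by simp
  then show ?thesis by (simp add: zero_le_mult_iff)
qed

definition "Bm = M 0 + e * (V 0 / c) / dM"

lemma M_le: assumes "t \<ge> 0" shows "M t \<le> Bm"
proof -
  have "(M t - Bm) * exp (dM * t) \<le> (M 0 - Bm) * exp (dM * 0)"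
  proof (rule M_cmp[OF order_refl _ assms])
    fix s :: real assume s: "s \<ge> 0"
    have "E s \<le> V 0 / c" using E_le[OF s] V_mono[OF order_refl s] c_pos
      by (meson divide_right_mono less_imp_le order_trans)
    then have "e * E s \<le> e * (V 0 / c)" using e_pos by (intro mult_left_mono) auto
    also have "\<dots> \<le> dM * Bm" using pos init' by (simp add: Bm_def algebra_simps)
    finally show "e * E s \<le> dM * Bm" .
  qed
  moreover have "M 0 - Bm \<le> 0" using e_pos c_pos pos V_nonneg[of 0] by (simp add: Bm_def)
  ultimately have "(M t - Bm) * exp (dM * t) \<le> 0" by simp
  then show ?thesis by (simp add: mult_le_0_iff)
qed

end


context msol begin

lemma V_small: assumes eta: "\<eta> > 0" shows "\<exists>t0\<ge>0. V t0 < \<eta>"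
proof (rule ccontr)
  assume "\<not> ?thesis"
  then have big: "V t \<ge> \<eta>" if "t \<ge> 0" for t using that by force
  define P where "P = c * bE / K"
  define R where "R = V 0 / a"
  have P: "P > 0" using pos c_pos by (simp add: P_def)
  have R: "R \<ge> 0" using V_nonneg[of 0] a_pos by (simp add: R_def)
  define den where "den = bE * R / K + a + dF"
  have den: "den > 0" using pos a_pos R by (simp add: den_def add_nonneg_pos add_pos_pos)
  define ep where "ep = P / den"
  have ep: "ep > 0" "ep * den = P" using P den by (auto simp: ep_def)
  define q where "q = min (\<eta>^2 / (4*c)) (bE * \<eta>^2 / (4*a^2))"
  have q: "q > 0" using eta c_pos a_pos pos by (simp add: q_def)
  define \<gamma> where "\<gamma> = ep * q"
  have \<gamma>: "\<gamma> > 0" using ep q by (simp add: \<gamma>_def)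
  define Wf where "Wf t = V t - ep * (E t * F t)" for t
  define Wd where "Wd t = (c * E' t + a * F' t) - ep * (E' t * F t + E t * F' t)" for t
  have dW: "Dv (\<lambda>t. Wf t + \<gamma> * t) (\<lambda>t. Wd t + \<gamma>)"
    using V_der dEv dFv unfolding Dv_def Wf_def[abs_def] Wd_def
    by (auto intro!: derivative_eq_intros)
  have Wd_le: "Wd t \<le> - \<gamma>" if t: "t \<ge> 0" for t
  proof -
    define X where "X = E t"
    define Y where "Y = F t"
    have X: "X \<ge> 0" and Y: "Y \<ge> 0" using EF_nonneg[OF t] by (auto simp: X_def Y_def)
    have YR: "Y \<le> R"
    proof -
      have "Y \<le> V t / a" using F_le[OF t] by (simp add: Y_def)
      also have "\<dots> \<le> V 0 / a" using V_mono[OF order_refl t] a_pos by (simp add: divide_right_mono)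
      finally show ?thesis by (simp add: R_def)
    qed
    have A: "Wd t = Y * (c*bE - a*dF) + (ep * den - P) * (X*Y) - ep * (bE*(Y*Y) + c*(X*X))
                    - (ep*bE/K) * (X*Y*(R - Y))"
      unfolding Wd_def E'_def F'_def X_def[symmetric] Y_def[symmetric] den_def P_def
      using pos by (simp add: field_simps)
    have t1: "Y * (c*bE - a*dF) \<le> 0" using Y bc_le by (intro mult_nonneg_nonpos) (auto simp: mult.commute)
    have t2: "(ep*bE/K) * (X*Y*(R - Y)) \<ge> 0" using ep pos X Y YR by simp
    have Vge: "c * X + a * Y \<ge> \<eta>" using big[OF t] by (simp add: V_def X_def Y_def)
    have t3: "bE*(Y*Y) + c*(X*X) \<ge> q"
    proof (cases "c * X \<ge> \<eta>/2")
      case True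
      then have "(\<eta>/2)*(\<eta>/2) \<le> (c*X)*(c*X)" using eta by (intro mult_mono) auto
      then have "\<eta>^2/(4*c) \<le> c*(X*X)" using c_pos
        by (simp add: power2_eq_square divide_le_eq field_simps)
      moreover have "bE*(Y*Y) \<ge> 0" using pos by simp
      ultimately show ?thesis unfolding q_def by linarith
    next
      case False
      then have "a * Y \<ge> \<eta>/2" using Vge by linarith
      then have "(\<eta>/2)*(\<eta>/2) \<le> (a*Y)*(a*Y)" using eta by (intro mult_mono) auto
      then have "\<eta>^2/(4*a^2) \<le> Y*Y" using a_pos
        by (simp add: power2_eq_square divide_le_eq field_simps)
      then have "bE * \<eta>^2/(4*a^2) \<le> bE*(Y*Y)" using pos
        by (metis mult_left_mono less_imp_le times_divide_eq_right)
      moreover have "c*(X*X) \<ge> 0" using c_pos by simp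
      ultimately show ?thesis unfolding q_def by linarith
    qed
    have "ep * q \<le> ep * (bE*(Y*Y) + c*(X*X))" using t3 ep by simp
    then show ?thesis using A t1 t2 ep(2) unfolding \<gamma>_def by simp
  qed
  have Wdec: "Wf t + \<gamma> * t \<le> Wf 0" if "t \<ge> 0" for t
    using Dv_antimono[OF dW order_refl _ that] Wd_le by fastforce
  define L where "L = ep * ((V 0 / c) * R)"
  have Wlow: "Wf t \<ge> - L" if t: "t \<ge> 0" for t
  proof -
    have e1: "E t \<le> V 0 / c" using E_le[OF t] V_mono[OF order_refl t] c_pos
      by (meson divide_right_mono less_imp_le order_trans)
    have f1: "F t \<le> R" using F_le[OF t] V_mono[OF order_refl t] a_pos unfolding R_def
      by (meson divide_right_mono less_imp_le order_trans)
    have "E t * F t \<le> (V 0 / c) * R" using e1 f1 EF_nonneg[OF t] by (intro mult_mono) auto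
    then have "ep * (E t * F t) \<le> L" using ep unfolding L_def by (intro mult_left_mono) auto
    then show ?thesis using V_nonneg[OF t] by (simp add: Wf_def)
  qed
  define T where "T = (Wf 0 + L + 1) / \<gamma>"
  have T0: "T \<ge> 0"
  proof -
    have "Wf 0 \<ge> - L" using Wlow by simp
    then show ?thesis using \<gamma> by (simp add: T_def)
  qed
  have "\<gamma> * T = Wf 0 + L + 1" using \<gamma> by (simp add: T_def)
  then show False using Wdec[OF T0] Wlow[OF T0] by linarith
qed

lemma V_tendsto: "(V \<longlongrightarrow> 0) at_top"
proof (rule order_tendstoI)
  fix y :: real assume "y < 0"
  then show "eventually (\<lambda>t. y < V t) at_top"
    using V_nonneg by (auto simp: eventually_at_top_linorder intro!: exI[of _ 0] less_le_trans[OF _ V_nonneg])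
next
  fix y :: real assume "0 < y"
  then obtain t0 where "t0 \<ge> 0" "V t0 < y" using V_small by blast
  then show "eventually (\<lambda>t. V t < y) at_top"
    unfolding eventually_at_top_linorder using V_mono by (meson le_less_trans)
qed

lemma E_tendsto: "(E \<longlongrightarrow> 0) at_top"
proof (rule tendsto_sandwich[where f="\<lambda>_. 0" and h="\<lambda>t. V t / c"])
  show "eventually (\<lambda>t. 0 \<le> E t) at_top" using EF_nonneg
    by (auto simp: eventually_at_top_linorder)
  show "eventually (\<lambda>t. E t \<le> V t / c) at_top" using E_le
    by (auto simp: eventually_at_top_linorder)
  show "((\<lambda>t. V t / c) \<longlongrightarrow> 0) at_top" using tendsto_divide_zero[OF V_tendsto] .
qed simp

lemma F_tendsto: "(F \<longlongrightarrow> 0) at_top"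
proof (rule tendsto_sandwich[where f="\<lambda>_. 0" and h="\<lambda>t. V t / a"])
  show "eventually (\<lambda>t. 0 \<le> F t) at_top" using EF_nonneg
    by (auto simp: eventually_at_top_linorder)
  show "eventually (\<lambda>t. F t \<le> V t / a) at_top" using F_le
    by (auto simp: eventually_at_top_linorder)
  show "((\<lambda>t. V t / a) \<longlongrightarrow> 0) at_top" using tendsto_divide_zero[OF V_tendsto] .
qed simp

end


context msol begin

lemma M_tendsto: "(M \<longlongrightarrow> 0) at_top"
proof (rule order_tendstoI)
  fix y :: real assume "y < 0"
  then show "eventually (\<lambda>t. y < M t) at_top"
    by (auto simp: eventually_at_top_linorder intro!: exI[of _ 0] less_le_trans[OF _ M_nonneg])
next
  fix y :: real assume y: "0 < y"
  define \<eta> where "\<eta> = y / 2"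
  have eta: "\<eta> > 0" using y by (simp add: \<eta>_def)
  have "dM * \<eta> / e > 0" using eta pos e_pos by simp
  then have "eventually (\<lambda>t. E t < dM * \<eta> / e) at_top"
    by (rule order_tendstoD(2)[OF E_tendsto])
  then obtain s0 where s0: "\<And>t. t \<ge> s0 \<Longrightarrow> E t < dM * \<eta> / e"
    unfolding eventually_at_top_linorder by blast
  define s where "s = max s0 0"
  have s: "s \<ge> 0" by (simp add: s_def)
  have Es: "e * E t \<le> dM * \<eta>" if "t \<ge> s" for t
  proof -
    have "E t < dM * \<eta> / e" using s0[of t] that by (simp add: s_def)
    then show ?thesis using e_pos by (simp add: pos_less_divide_eq mult.commute less_imp_le)
  qed
  have Bm0: "Bm \<ge> 0" using init' e_pos c_pos pos V_nonneg[of 0] by (simp add: Bm_def)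
  define z where "z = ln (\<eta> / (Bm + 1))"
  have "eventually (\<lambda>t. Bm * exp (dM * (s - t)) < \<eta>) at_top"
    unfolding eventually_at_top_linorder
  proof (intro exI[of _ "s - z / dM + 1"] allI impI)
    fix t assume t: "s - z / dM + 1 \<le> t"
    have "dM * (s - t) \<le> dM * (z / dM - 1)" using t pos by (intro mult_left_mono) auto
    also have "\<dots> = z - dM" using pos by (simp add: field_simps)
    finally have "dM * (s - t) < z" using pos by linarith
    then have "exp (dM * (s - t)) < exp z" by simp
    also have "exp z = \<eta> / (Bm + 1)" using eta Bm0 by (simp add: z_def)
    finally have "(Bm + 1) * exp (dM * (s - t)) < \<eta>" using Bm0 by (simp add: pos_less_divide_eq mult.commute)
    moreover have "Bm * exp (dM * (s - t)) \<le> (Bm + 1) * exp (dM * (s - t))" by simp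
    ultimately show "Bm * exp (dM * (s - t)) < \<eta>" by linarith
  qed
  moreover have "eventually (\<lambda>t. t \<ge> s) at_top" by (rule eventually_ge_at_top)
  ultimately show "eventually (\<lambda>t. M t < y) at_top"
  proof eventually_elim
    case (elim t)
    have "(M t - \<eta>) * exp (dM * t) \<le> (M s - \<eta>) * exp (dM * s)"
      by (rule M_cmp[OF s Es elim(2)])
    also have "\<dots> \<le> Bm * exp (dM * s)"
      using M_le[OF s] eta by (intro mult_right_mono) auto
    finally have "M t - \<eta> \<le> Bm * exp (dM * s) / exp (dM * t)"
      by (simp add: pos_le_divide_eq)
    also have "Bm * exp (dM * s) / exp (dM * t) = Bm * exp (dM * (s - t))"
      by (simp add: exp_diff right_diff_distrib)
    finally show ?case using elim(1) by (simp add: \<eta>_def)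
  qed
qed

lemma x_tendsto: "(x \<longlongrightarrow> (0,0,0)) at_top"
proof -
  have "((\<lambda>t. (E t, M t, F t)) \<longlongrightarrow> (0,0,0)) at_top"
    by (intro tendsto_Pair E_tendsto M_tendsto F_tendsto)
  moreover have "x = (\<lambda>t. (E t, M t, F t))" by (rule ext, rule x_eq)
  ultimately show ?thesis by simp
qed

lemma norm_bound: assumes "t \<ge> 0" shows "norm (x t) \<le> E t + M t + F t"
proof -
  have "norm (x t) \<le> norm (E t) + norm (M t, F t)" by (subst x_eq) (rule norm_Pair_le)
  also have "norm (M t, F t) \<le> norm (M t) + norm (F t)" by (rule norm_Pair_le)
  finally show ?thesis using EF_nonneg[OF assms] M_nonneg[OF assms] by simp
qed

lemma init_bound: "E 0 \<le> norm (x 0)" "M 0 \<le> norm (x 0)" "F 0 \<le> norm (x 0)"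
proof -
  have n1: "norm (E 0) \<le> norm (x 0)" "norm (M 0, F 0) \<le> norm (x 0)"
    by (subst x_eq, rule norm_fst_le, subst x_eq, rule norm_snd_le)
  have "norm (M 0) \<le> norm (M 0, F 0)" "norm (F 0) \<le> norm (M 0, F 0)"
    by (rule norm_fst_le, rule norm_snd_le)
  then show "E 0 \<le> norm (x 0)" "M 0 \<le> norm (x 0)" "F 0 \<le> norm (x 0)" using n1 by auto
qed

end

context mosq begin

definition "Cst = 1 + (c + a) * (1/c + 1/a + e/(c*dM))"

lemma Cst_pos: "Cst > 0"
  using a_pos c_pos e_pos pos by (simp add: Cst_def add_pos_nonneg)

lemma sol_bound:
  assumes "is_solution (mosq_field bE nE dE dM dF K nu) x" "x 0 \<in> nonneg_orthant" "t \<ge> 0"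
  shows "norm (x t) \<le> Cst * norm (x 0)"
proof -
  interpret S: msol bE nE dE dM dF K nu x
    by (intro msol.intro mosq_axioms msol_axioms.intro) (use assms in auto)
  define n0 where "n0 = norm (x 0)"
  have V0: "S.V 0 \<le> (c + a) * n0"
  proof -
    have "c * S.E 0 \<le> c * n0" using S.init_bound c_pos unfolding n0_def by (intro mult_left_mono) auto
    moreover have "a * S.F 0 \<le> a * n0" using S.init_bound a_pos unfolding n0_def by (intro mult_left_mono) auto
    ultimately show ?thesis unfolding S.V_def by (simp add: distrib_right)
  qed
  have V0n: "S.V 0 \<ge> 0" using S.V_nonneg by simp
  have Vt: "S.V t \<le> S.V 0" using S.V_mono[OF order_refl assms(3)] .
  have "S.E t \<le> S.V 0 / c" using S.E_le[OF assms(3)] Vt c_pos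
    by (meson divide_right_mono less_imp_le order_trans)
  moreover have "S.F t \<le> S.V 0 / a" using S.F_le[OF assms(3)] Vt a_pos
    by (meson divide_right_mono less_imp_le order_trans)
  moreover have "S.M t \<le> n0 + S.V 0 * (e/(c*dM))"
  proof -
    have q: "e * (S.V 0 / c) / dM = S.V 0 * (e/(c*dM))" by simp
    have "S.M t \<le> S.M 0 + e * (S.V 0 / c) / dM" using S.M_le[OF assms(3)] unfolding S.Bm_def .
    then show ?thesis using S.init_bound(2) unfolding q n0_def by linarith
  qed
  moreover have "S.V 0 * (1/c + 1/a + e/(c*dM)) = S.V 0 / c + S.V 0 / a + S.V 0 * (e/(c*dM))"
    by (simp add: distrib_left)
  ultimately have "norm (x t) \<le> n0 + S.V 0 * (1/c + 1/a + e/(c*dM))"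
    using S.norm_bound[OF assms(3)] by linarith
  also have "\<dots> \<le> n0 + ((c + a) * n0) * (1/c + 1/a + e/(c*dM))"
    using V0 a_pos c_pos e_pos pos by (intro add_left_mono mult_right_mono) auto
  also have "\<dots> = Cst * n0" using a_pos c_pos pos by (simp add: Cst_def field_simps)
  finally show ?thesis by (simp add: n0_def)
qed

lemma GAS: "GAS_in (mosq_field bE nE dE dM dF K nu) nonneg_orthant (0, 0, 0)"
  unfolding GAS_in_def
proof
  show "stable_in (mosq_field bE nE dE dM dF K nu) nonneg_orthant (0, 0, 0)"
    unfolding stable_in_def
  proof (intro allI impI)
    fix \<epsilon> :: real assume ep: "\<epsilon> > 0"
    show "\<exists>\<delta>>0. \<forall>x. is_solution (mosq_field bE nE dE dM dF K nu) x \<and> x 0 \<in> nonneg_orthant \<and>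
        norm (x 0 - (0,0,0)) < \<delta> \<longrightarrow> (\<forall>t>0. norm (x t - (0,0,0)) < \<epsilon>)"
    proof (intro exI[of _ "\<epsilon> / Cst"] conjI allI impI)
      show "\<epsilon> / Cst > 0" using ep Cst_pos by simp
      fix x t assume H: "is_solution (mosq_field bE nE dE dM dF K nu) x \<and> x 0 \<in> nonneg_orthant \<and>
        norm (x 0 - (0,0,0)) < \<epsilon> / Cst" and t: "(t::real) > 0"
      have z: "(0::real, 0::real, 0::real) = 0" by (simp add: zero_prod_def)
      have "norm (x t) \<le> Cst * norm (x 0)" using sol_bound H t by auto
      also have "\<dots> < Cst * (\<epsilon> / Cst)" using H Cst_pos z by (intro mult_strict_left_mono) auto
      also have "\<dots> = \<epsilon>" using Cst_pos by simp
      finally show "norm (x t - (0,0,0)) < \<epsilon>" using z by simp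
    qed
  qed
  show "global_attractor_in (mosq_field bE nE dE dM dF K nu) nonneg_orthant (0, 0, 0)"
    unfolding global_attractor_in_def
  proof (intro allI impI)
    fix x assume H: "is_solution (mosq_field bE nE dE dM dF K nu) x \<and> x 0 \<in> nonneg_orthant"
    interpret S: msol bE nE dE dM dF K nu x
      by (intro msol.intro mosq_axioms msol_axioms.intro) (use H in auto)
    show "(x \<longlongrightarrow> (0,0,0)) at_top" by (rule S.x_tendsto)
  qed
qed

end

theorem theorem1:
  fixes \<beta>E \<nu>E \<delta>E \<delta>M \<delta>F K \<nu> :: real
  assumes "\<beta>E > 0" "\<nu>E > 0" "\<delta>E > 0" "\<delta>M > 0" "\<delta>F > 0" "K > 0"
    and "0 < \<nu>" "\<nu> < 1"
    and "R0 \<beta>E \<nu>E \<delta>E \<delta>F \<nu> \<le> 1"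
  shows "GAS_in (mosq_field \<beta>E \<nu>E \<delta>E \<delta>M \<delta>F K \<nu>) nonneg_orthant (0, 0, 0)"
proof -
  interpret mosq \<beta>E \<nu>E \<delta>E \<delta>M \<delta>F K \<nu> by unfold_locales (use assms in auto)
  show ?thesis by (rule GAS)
qed


end
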